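(* Let $(S,+,\cdot)$ be a left inverse semi-brace and let $r_S$ be the map associated to $S$. Suppose that for all $a,b,c\in S$: (1) $(a+b)(a+b)^{-1}(a+bc)=a+bc$; (2) $\lambda_a(b)^{-1}+\lambda_{\rho_b(a)}(c)=\lambda_a(b)^{-1}+\lambda_{(a^{-1}+b)^{-1}}\lambda_b(c)$; (3) $\rho_b(a)^{-1}+c=(b^{-1}+c)\left(\rho_{\lambda_b(c)}(a)^{-1}+\rho_c(b)\right)$. Then $r_S$ is a solution of the Yang–Baxter equation.
   Context: An inverse semigroup is a semigroup $(S,\cdot)$ in which for each $a$ there is a unique $a^{-1}$ with $aa^{-1}a=a$ and $a^{-1}aa^{-1}=a^{-1}$. A left inverse semi-brace is a triple $(S,+,\cdot)$ where $(S,+)$ is a semigroup (not necessarily commutative), $(S,\cdot)$ is an inverse semigroup, and $a(b+c)=ab+a(a^{-1}+c)$ for all $a,b,c\in S$. For such $S$ set $\lambda_a(b)=a(a^{-1}+b)$ and $\rho_b(a)=(a^{-1}+b)^{-1}b$, and the map associated to $S$ is $r_S:S\times S\to S\times S$, $r_S(a,b)=(\lambda_a(b),\rho_b(a))$. A map $r:S\times S\to S\times S$ is a solution of the Yang–Baxter equation if $(r\times \mathrm{id}_S)(\mathrm{id}_S\times r)(r\times\mathrm{id}_S)=(\mathrm{id}_S\times r)(r\times\mathrm{id}_S)(\mathrm{id}_S\times r)$. *)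

theory Defs
  imports Main
begin

definition semigroup_op :: "('a \<Rightarrow> 'a \<Rightarrow> 'a) \<Rightarrow> bool" where
  "semigroup_op f \<longleftrightarrow> (\<forall>a b c. f (f a b) c = f a (f b c))"

definition inverse_semigroup :: "('a \<Rightarrow> 'a \<Rightarrow> 'a) \<Rightarrow> bool" where
  "inverse_semigroup m \<longleftrightarrow> semigroup_op m \<and>
     (\<forall>a. \<exists>!b. m (m a b) a = a \<and> m (m b a) b = b)"

definition sinv :: "('a \<Rightarrow> 'a \<Rightarrow> 'a) \<Rightarrow> 'a \<Rightarrow> 'a" where
  "sinv m a = (THE b. m (m a b) a = a \<and> m (m b a) b = b)"

definition left_inverse_semi_brace ::
  "('a \<Rightarrow> 'a \<Rightarrow> 'a) \<Rightarrow> ('a \<Rightarrow> 'a \<Rightarrow> 'a) \<Rightarrow> bool" where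
  "left_inverse_semi_brace add m \<longleftrightarrow> semigroup_op add \<and> inverse_semigroup m \<and>
     (\<forall>a b c. m a (add b c) = add (m a b) (m a (add (sinv m a) c)))"

definition lam :: "('a \<Rightarrow> 'a \<Rightarrow> 'a) \<Rightarrow> ('a \<Rightarrow> 'a \<Rightarrow> 'a) \<Rightarrow> 'a \<Rightarrow> 'a \<Rightarrow> 'a" where
  "lam add m a b = m a (add (sinv m a) b)"

definition rho :: "('a \<Rightarrow> 'a \<Rightarrow> 'a) \<Rightarrow> ('a \<Rightarrow> 'a \<Rightarrow> 'a) \<Rightarrow> 'a \<Rightarrow> 'a \<Rightarrow> 'a" where
  "rho add m b a = m (sinv m (add (sinv m a) b)) b"

definition r_map :: "('a \<Rightarrow> 'a \<Rightarrow> 'a) \<Rightarrow> ('a \<Rightarrow> 'a \<Rightarrow> 'a) \<Rightarrow> 'a \<times> 'a \<Rightarrow> 'a \<times> 'a" where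
  "r_map add m = (\<lambda>(a, b). (lam add m a b, rho add m b a))"

definition r12 :: "('a \<times> 'a \<Rightarrow> 'a \<times> 'a) \<Rightarrow> 'a \<times> 'a \<times> 'a \<Rightarrow> 'a \<times> 'a \<times> 'a" where
  "r12 r = (\<lambda>(x, y, z). let (u, v) = r (x, y) in (u, v, z))"

definition r23 :: "('a \<times> 'a \<Rightarrow> 'a \<times> 'a) \<Rightarrow> 'a \<times> 'a \<times> 'a \<Rightarrow> 'a \<times> 'a \<times> 'a" where
  "r23 r = (\<lambda>(x, y, z). let (v, w) = r (y, z) in (x, v, w))"

definition is_YBE_solution :: "('a \<times> 'a \<Rightarrow> 'a \<times> 'a) \<Rightarrow> bool" where
  "is_YBE_solution r \<longleftrightarrow> r12 r \<circ> r23 r \<circ> r12 r = r23 r \<circ> r12 r \<circ> r23 r"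

end

theory Submission
  imports Defs
begin

locale invsg =
  fixes m :: "'a \<Rightarrow> 'a \<Rightarrow> 'a"
  assumes isg: "inverse_semigroup m"
begin

abbreviation i where "i \<equiv> sinv m"

lemma assoc[simp]: "m (m a b) c = m a (m b c)"
  using isg unfolding inverse_semigroup_def semigroup_op_def by blast

lemma inv_ex: "m (m a (i a)) a = a \<and> m (m (i a) a) (i a) = i a"
proof -
  have "\<exists>!b. m (m a b) a = a \<and> m (m b a) b = b"
    using isg unfolding inverse_semigroup_def by blast
  then show ?thesis unfolding sinv_def by (rule theI')
qed

lemma inv1[simp]: "m a (m (i a) a) = a" using inv_ex by simp
lemma inv2[simp]: "m (i a) (m a (i a)) = i a" using inv_ex by simp

lemma inv1'[simp]: "m a (m (i a) (m a c)) = m a c"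
  by (metis assoc inv1)
lemma inv2'[simp]: "m (i a) (m a (m (i a) c)) = m (i a) c"
  by (metis assoc inv2)

lemma uniq: assumes "m a (m b a) = a" "m b (m a b) = b" shows "b = i a"
proof -
  have ex: "\<exists>!b. m (m a b) a = a \<and> m (m b a) b = b"
    using isg unfolding inverse_semigroup_def by blast
  have pb: "m (m a b) a = a \<and> m (m b a) b = b" using assms by simp
  have pi: "m (m a (i a)) a = a \<and> m (m (i a) a) (i a) = i a" by (rule inv_ex)
  show ?thesis using ex pb pi by blast
qed

lemma ii[simp]: "i (i a) = a"
  by (rule uniq[symmetric]) simp_all

lemma idem_comm:
  assumes e: "m e e = e" and f: "m f f = f"
  shows "m e f = m f e"
proof -
  have el: "m e (m e y) = m e y" for y by (metis assoc e)
  have fl: "m f (m f y) = m f y" for y by (metis assoc f)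
  define x where "x = i (m e f)"
  have x1: "m e (m f (m x (m e f))) = m e f" unfolding x_def using inv_ex[of "m e f"] by (simp del: inv1 inv2 inv1' inv2')
  have x2: "m x (m e (m f x)) = x" unfolding x_def using inv_ex[of "m e f"] by (simp del: inv1 inv2 inv1' inv2')
  have "m f (m x e) = i (m e f)"
  proof (rule uniq)
    show "m (m e f) (m (m f (m x e)) (m e f)) = m e f"
      using x1 by (simp add: el fl)
    show "m (m f (m x e)) (m (m e f) (m f (m x e))) = m f (m x e)"
      using x2 by (simp add: el fl) (metis assoc x2)
  qed
  hence fxe: "m f (m x e) = x" unfolding x_def .
  have xx: "m x x = x"
  proof -
    have "m x x = m (m f (m x e)) (m f (m x e))" using fxe by simp
    also have "\<dots> = m f (m (m x (m e (m f x))) e)" by simp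
    also have "\<dots> = x" using x2 fxe by simp
    finally show ?thesis .
  qed
  have "m e f = i x" unfolding x_def by simp
  also have "i x = x" by (rule uniq[symmetric]) (simp_all del: assoc add: xx)
  finally have efx: "m e f = x" .
  hence ef: "m (m e f) (m e f) = m e f" using xx by simp
  have fe: "m (m f e) (m f e) = m f e"
  proof -
    define y where "y = i (m f e)"
    have y1: "m f (m e (m y (m f e))) = m f e" unfolding y_def using inv_ex[of "m f e"] by (simp del: inv1 inv2 inv1' inv2')
    have y2: "m y (m f (m e y)) = y" unfolding y_def using inv_ex[of "m f e"] by (simp del: inv1 inv2 inv1' inv2')
    have "m e (m y f) = i (m f e)"
    proof (rule uniq)
      show "m (m f e) (m (m e (m y f)) (m f e)) = m f e"
        using y1 by (simp add: el fl)
      show "m (m e (m y f)) (m (m f e) (m e (m y f))) = m e (m y f)"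
        using y2 by (simp add: el fl) (metis assoc y2)
    qed
    hence eyf: "m e (m y f) = y" unfolding y_def .
    have yy: "m y y = y"
    proof -
      have "m y y = m (m e (m y f)) (m e (m y f))" using eyf by simp
      also have "\<dots> = m e (m (m y (m f (m e y))) f)" by simp
      also have "\<dots> = y" using y2 eyf by simp
      finally show ?thesis .
    qed
    have "m f e = i y" unfolding y_def by simp
    also have "i y = y" by (rule uniq[symmetric]) (simp_all del: assoc add: yy)
    finally have "m f e = y" .
    thus ?thesis using yy by simp
  qed
  have "m f e = i (m e f)"
  proof (rule uniq)
    show "m (m e f) (m (m f e) (m e f)) = m e f"
      using ef by (simp add: el fl)
    show "m (m f e) (m (m e f) (m f e)) = m f e"
      using fe by (simp add: el fl)
  qed
  also have "i (m e f) = m e f"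
    by (rule uniq[symmetric]) (use ef in \<open>simp_all del: assoc\<close>)
  finally show ?thesis by simp
qed

lemma idem_aa: "m (m a (i a)) (m a (i a)) = m a (i a)" by simp
lemma idem_ia: "m (m (i a) a) (m (i a) a) = m (i a) a" by simp

lemma inv_mult: "i (m a b) = m (i b) (i a)"
proof (rule uniq[symmetric])
  have c: "m (m b (i b)) (m (i a) a) = m (m (i a) a) (m b (i b))"
    by (rule idem_comm) simp_all
  show "m (m a b) (m (m (i b) (i a)) (m a b)) = m a b"
  proof -
    have "m (m a b) (m (m (i b) (i a)) (m a b)) = m a (m (m b (i b)) (m (m (i a) a) b))" by simp
    also have "\<dots> = m a (m (m (m (i a) a) (m b (i b))) b)" by (metis assoc c)
    also have "\<dots> = m a b" by simp
    finally show ?thesis .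
  qed
  show "m (m (i b) (i a)) (m (m a b) (m (i b) (i a))) = m (i b) (i a)"
  proof -
    have "m (m (i b) (i a)) (m (m a b) (m (i b) (i a))) = m (i b) (m (m (m (i a) a) (m b (i b))) (i a))" by simp
    also have "\<dots> = m (i b) (m (m (m b (i b)) (m (i a) a)) (i a))" using c by simp
    also have "\<dots> = m (i b) (i a)" by simp
    finally show ?thesis .
  qed
qed

end


theorem theorem12:
  fixes add :: "'a \<Rightarrow> 'a \<Rightarrow> 'a" and m :: "'a \<Rightarrow> 'a \<Rightarrow> 'a"
  assumes brace: "left_inverse_semi_brace add m"
    and c1: "\<And>a b c. m (m (add a b) (sinv m (add a b))) (add a (m b c)) = add a (m b c)"
    and c2: "\<And>a b c. add (sinv m (lam add m a b)) (lam add m (rho add m b a) c)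
                 = add (sinv m (lam add m a b))
                       (lam add m (sinv m (add (sinv m a) b)) (lam add m b c))"
    and c3: "\<And>a b c. add (sinv m (rho add m b a)) c
                 = m (add (sinv m b) c)
                     (add (sinv m (rho add m (lam add m b c) a)) (rho add m c b))"
  shows "is_YBE_solution (r_map add m)"
proof -
  interpret invsg m using brace unfolding left_inverse_semi_brace_def by unfold_locales blast
  have B: "\<And>a b c. m a (add b c) = add (m a b) (m a (add (i a) c))"
    using brace unfolding left_inverse_semi_brace_def by blast
  let ?lam = "lam add m" and ?rho = "rho add m"
  have lamd: "\<And>a b. ?lam a b = m a (add (i a) b)" by (simp add: lam_def)
  have rhod: "\<And>a b. ?rho b a = m (i (add (i a) b)) b" by (simp add: rho_def)
  have key: "?lam (?lam x y) (?lam (?rho y x) z) = ?lam x (?lam y z) \<and>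
     ?rho (?lam (?rho y x) z) (?lam x y) = ?lam (?rho (?lam y z) x) (?rho z y) \<and>
     ?rho z (?rho y x) = ?rho (?rho z y) (?rho (?lam y z) x)" for x y z
  proof -
    define p where "p = add (i x) y"
    define w where "w = ?lam y z"
    define u where "u = ?lam x y"
    define v where "v = ?rho y x"
    define q where "q = ?rho w x"
    define s where "s = ?rho z y"
    define X where "X = add (i x) w"
    have u: "u = m x p" unfolding u_def p_def lamd ..
    have v: "v = m (i p) y" unfolding v_def p_def rhod ..
    have w: "w = m y (add (i y) z)" unfolding w_def lamd ..
    have q: "q = m (i X) w" unfolding q_def X_def rhod ..
    have P1: "add (i u) (?lam (i p) w) = m (i p) X"
      unfolding u X_def lamd inv_mult ii using B[of "i p" "i x" w] by simp
    have C1: "m p (m (i p) X) = X"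
      using c1[of "i x" y "add (i y) z"] unfolding X_def w p_def by simp
    have c2': "add (i u) (?lam v z) = m (i p) X"
      using c2[where a=x and b=y and c=z] P1 unfolding u_def v_def p_def w_def by simp
    have c3': "add (i v) z = m (add (i y) z) (add (i q) s)"
      using c3[where a=x and b=y and c=z] unfolding v_def q_def s_def w_def by simp
    have E1: "?lam u (?lam v z) = ?lam x w"
    proof -
      have "?lam u (?lam v z) = m u (m (i p) X)" unfolding lamd[of u] using c2' by simp
      also have "\<dots> = m x X" unfolding u using C1 by simp
      finally show ?thesis unfolding lamd[of x] X_def .
    qed
    have E3: "?rho z v = ?rho s q"
    proof -
      have "?rho z v = m (i (add (i v) z)) z" unfolding rhod ..
      also have "\<dots> = m (i (add (i q) s)) (m (i (add (i y) z)) z)"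
        unfolding c3' inv_mult by simp
      also have "\<dots> = ?rho s q" unfolding rhod s_def by simp
      finally show ?thesis .
    qed
    have iX: "m (i X) (m p (i p)) = i X"
    proof -
      have "i X = i (m p (m (i p) X))" using C1 by simp
      also have "\<dots> = m (i X) (m p (i p))" unfolding inv_mult ii by simp
      finally show ?thesis by simp
    qed
    have iX': "m (i X) (m p (m (i p) Y)) = m (i X) Y" for Y
      by (metis assoc iX)
    have E2: "?rho (?lam v z) u = ?lam q s"
    proof -
      have t: "?lam v z = m (i p) (m w (add (i q) s))"
        unfolding lamd[of v] c3' unfolding v w by simp
      have "?rho (?lam v z) u = m (i (add (i u) (?lam v z))) (?lam v z)" unfolding rhod ..
      also have "\<dots> = m (i X) (m p (m (i p) (m w (add (i q) s))))"
        unfolding c2' unfolding t inv_mult ii by simp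
      also have "\<dots> = m (i X) (m w (add (i q) s))" by (rule iX')
      also have "\<dots> = ?lam q s" unfolding lamd[of q] unfolding q by simp
      finally show ?thesis .
    qed
    show ?thesis using E1 E2 E3 unfolding u_def v_def w_def q_def s_def by simp
  qed
  show ?thesis unfolding is_YBE_solution_def
  proof (rule ext)
    fix t :: "'a \<times> 'a \<times> 'a"
    obtain x y z where t: "t = (x, y, z)" by (cases t) auto
    show "(r12 (r_map add m) \<circ> r23 (r_map add m) \<circ> r12 (r_map add m)) t =
          (r23 (r_map add m) \<circ> r12 (r_map add m) \<circ> r23 (r_map add m)) t"
      unfolding t using key[of x y z] by (simp add: r12_def r23_def r_map_def)
  qed
qed

end
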